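(* Let $(X,\tau)$ and $(Y,\sigma)$ be fuzzifying topological spaces, $f:X\to Y$, and let $\beta^X_P\in\Im(P(X))$ be a pre-base of $\tau_P$. Then $$O_P(f)=\inf_{B\subseteq X}\min\big(1,\ 1-\beta_P^X(B)+\sigma_P(f(B))\big),$$ i.e. $O_P(f)=[\forall B(B\in\beta^X_P\to f(B)\in\sigma_P)]$.
   Context: A fuzzifying topology on $Z$ is $\tau:P(Z)\to[0,1]$ with $\tau(Z)=1$, $\tau(A\cap B)\ge\min(\tau(A),\tau(B))$, $\tau(\bigcup A_\lambda)\ge\inf\tau(A_\lambda)$. $N_x(A)=\sup_{x\in B\subseteq A}\tau(B)$; $Cl(A)(x)=1-N_x(Z\setminus A)$; for $\mu:Z\to[0,1]$, $Int(\mu)(x)=\sup_{x\in B}\min(\tau(B),\inf_{y\in B}\mu(y))$; pre-open degrees $\tau_P(A)=\inf_{x\in A}Int(Cl(A))(x)$ (similarly $\sigma_P$ for $(Y,\sigma)$); $N^P_x(A)=\sup_{x\in B\subseteq A}\tau_P(B)$. A pre-base of $\tau_P$ is $\beta\in\Im(P(X))$ with $\beta\le\tau_P$ pointwise and $N^P_x(A)\le\sup_{x\in B\subseteq A}\beta(B)$ for all $x\in X$, $A\subseteq X$. Fuzzifying pre-openness: $O_P(f)=\inf_{U\subseteq X}\min(1,1-\tau_P(U)+\sigma_P(f(U)))$. *)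

theory Defs
  imports "HOL-Analysis.Analysis"
begin

text \<open>Suprema/infima are taken in the
complete lattice [0,1]: sup of the empty family is 0, inf of the empty family is 1.
This is realised by inserting 0 (resp. 1) into the set, harmless for [0,1]-valued data.\<close>

definition sup01 :: "real set \<Rightarrow> real" where
  "sup01 S = Sup (insert 0 S)"

definition inf01 :: "real set \<Rightarrow> real" where
  "inf01 S = Inf (insert 1 S)"

definition fuzzy_set :: "('a \<Rightarrow> real) \<Rightarrow> bool" where
  "fuzzy_set \<mu> \<longleftrightarrow> (\<forall>a. 0 \<le> \<mu> a \<and> \<mu> a \<le> 1)"

text \<open>Fuzzifying topology on the whole type 'a (Z = UNIV).\<close>
definition fuzzifying_topology :: "('a set \<Rightarrow> real) \<Rightarrow> bool" where
  "fuzzifying_topology \<tau> \<longleftrightarrow>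
     fuzzy_set \<tau> \<and> \<tau> UNIV = 1 \<and>
     (\<forall>A B. \<tau> (A \<inter> B) \<ge> min (\<tau> A) (\<tau> B)) \<and>
     (\<forall>\<A>. \<tau> (\<Union>\<A>) \<ge> inf01 (\<tau> ` \<A>))"

definition nbhd :: "('a set \<Rightarrow> real) \<Rightarrow> 'a \<Rightarrow> 'a set \<Rightarrow> real" where
  "nbhd \<tau> x A = sup01 {\<tau> B | B. x \<in> B \<and> B \<subseteq> A}"

definition fcl :: "('a set \<Rightarrow> real) \<Rightarrow> 'a set \<Rightarrow> 'a \<Rightarrow> real" where
  "fcl \<tau> A x = 1 - nbhd \<tau> x (- A)"

definition fint :: "('a set \<Rightarrow> real) \<Rightarrow> ('a \<Rightarrow> real) \<Rightarrow> 'a \<Rightarrow> real" where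
  "fint \<tau> \<mu> x = sup01 {min (\<tau> B) (inf01 (\<mu> ` B)) | B. x \<in> B}"

definition preopen :: "('a set \<Rightarrow> real) \<Rightarrow> 'a set \<Rightarrow> real" where
  "preopen \<tau> A = inf01 ((\<lambda>x. fint \<tau> (fcl \<tau> A) x) ` A)"

definition pre_nbhd :: "('a set \<Rightarrow> real) \<Rightarrow> 'a \<Rightarrow> 'a set \<Rightarrow> real" where
  "pre_nbhd \<tau> x A = sup01 {preopen \<tau> B | B. x \<in> B \<and> B \<subseteq> A}"

definition is_prebase :: "('a set \<Rightarrow> real) \<Rightarrow> ('a set \<Rightarrow> real) \<Rightarrow> bool" where
  "is_prebase \<tau> \<beta> \<longleftrightarrow> fuzzy_set \<beta> \<and> (\<forall>B. \<beta> B \<le> preopen \<tau> B) \<and>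
     (\<forall>x A. pre_nbhd \<tau> x A \<le> sup01 {\<beta> B | B. x \<in> B \<and> B \<subseteq> A})"

definition pre_open_deg :: "('a set \<Rightarrow> real) \<Rightarrow> ('b set \<Rightarrow> real) \<Rightarrow> ('a \<Rightarrow> 'b) \<Rightarrow> real" where
  "pre_open_deg \<tau> \<sigma> f = inf01 {min 1 (1 - preopen \<tau> U + preopen \<sigma> (f ` U)) | U. True}"

end

theory Submission
  imports Defs
begin

lemma inf01_le: "bdd_below (S::real set) \<Longrightarrow> s \<in> S \<Longrightarrow> inf01 S \<le> s"
  unfolding inf01_def by (rule cInf_lower) auto

lemma inf01_le1: "bdd_below (S::real set) \<Longrightarrow> inf01 S \<le> 1"
  unfolding inf01_def by (rule cInf_lower) auto

lemma inf01_ge: "c \<le> 1 \<Longrightarrow> (\<And>s. s \<in> S \<Longrightarrow> c \<le> s) \<Longrightarrow> c \<le> inf01 (S::real set)"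
  unfolding inf01_def by (rule cInf_greatest) auto

lemma sup01_ge: "bdd_above (S::real set) \<Longrightarrow> s \<in> S \<Longrightarrow> s \<le> sup01 S"
  unfolding sup01_def by (rule cSup_upper) auto

lemma sup01_ge0: "bdd_above (S::real set) \<Longrightarrow> 0 \<le> sup01 S"
  unfolding sup01_def by (rule cSup_upper) auto

lemma sup01_le: "0 \<le> c \<Longrightarrow> (\<And>s. s \<in> S \<Longrightarrow> s \<le> c) \<Longrightarrow> sup01 (S::real set) \<le> c"
  unfolding sup01_def by (rule cSup_least) auto

lemma sup01_gt: "bdd_above (S::real set) \<Longrightarrow> a < sup01 S \<Longrightarrow> a < 0 \<or> (\<exists>s\<in>S. a < s)"
  unfolding sup01_def by (subst (asm) less_cSup_iff) auto

context
  fixes \<tau> :: "'a set \<Rightarrow> real"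
  assumes fz: "fuzzy_set \<tau>"
begin

lemma bdd_tau: "bdd_above {\<tau> B | B. P B}"
  using fz unfolding fuzzy_set_def by (intro bdd_aboveI[of _ 1]) auto

lemma nbhd_01: "0 \<le> nbhd \<tau> x A" "nbhd \<tau> x A \<le> 1"
  unfolding nbhd_def
   apply (rule sup01_ge0[OF bdd_tau])
  using fz unfolding fuzzy_set_def by (intro sup01_le) auto

lemma fcl_01: "0 \<le> fcl \<tau> A x" "fcl \<tau> A x \<le> 1"
  unfolding fcl_def using nbhd_01 by auto

lemma bdd_fint: "bdd_above {min (\<tau> B) (inf01 (\<mu> ` B)) | B. x \<in> B}"
  using fz unfolding fuzzy_set_def by (intro bdd_aboveI[of _ 1]) (auto simp: min_le_iff_disj)

lemma fint_01: "0 \<le> fint \<tau> \<mu> x" "fint \<tau> \<mu> x \<le> 1"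
  unfolding fint_def
   apply (rule sup01_ge0[OF bdd_fint])
  using fz unfolding fuzzy_set_def by (intro sup01_le) (auto simp: min_le_iff_disj)

lemma preopen_01: "0 \<le> preopen \<tau> A" "preopen \<tau> A \<le> 1"
  unfolding preopen_def
   apply (rule inf01_ge) using fint_01 apply auto[2]
  apply (rule inf01_le1) using fint_01 by (intro bdd_belowI[of _ 0]) auto

lemma bdd_preopen: "bdd_above {preopen \<tau> B | B. P B}"
  using preopen_01 by (intro bdd_aboveI[of _ 1]) auto

lemma nbhd_mono: "A \<subseteq> A' \<Longrightarrow> nbhd \<tau> x A \<le> nbhd \<tau> x A'"
  unfolding nbhd_def
  apply (rule sup01_le)
  using nbhd_01(1)[unfolded nbhd_def] apply blast
  apply (rule sup01_ge[OF bdd_tau]) by auto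

lemma fcl_mono: "A \<subseteq> A' \<Longrightarrow> fcl \<tau> A x \<le> fcl \<tau> A' x"
  unfolding fcl_def using nbhd_mono[of "- A'" "- A" x] by auto

lemma fint_mono:
  assumes "\<And>y. 0 \<le> \<mu> y" "\<And>y. \<mu> y \<le> \<mu>' y"
  shows "fint \<tau> \<mu> x \<le> fint \<tau> \<mu>' x"
proof -
  have inf_mono: "inf01 (\<mu> ` B) \<le> inf01 (\<mu>' ` B)" for B
  proof (rule inf01_ge)
    have bb: "bdd_below (\<mu> ` B)" using assms by (intro bdd_belowI[of _ 0]) auto
    show "inf01 (\<mu> ` B) \<le> 1" by (rule inf01_le1[OF bb])
    fix s assume "s \<in> \<mu>' ` B"
    then obtain y where "y \<in> B" "s = \<mu>' y" by auto
    then show "inf01 (\<mu> ` B) \<le> s" using inf01_le[OF bb, of "\<mu> y"] assms(2)[of y] by simp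
  qed
  show ?thesis
    unfolding fint_def
    apply (rule sup01_le)
    using fint_01(1)[unfolded fint_def] apply blast
  proof -
    fix s assume "s \<in> {min (\<tau> B) (inf01 (\<mu> ` B)) | B. x \<in> B}"
    then obtain B where B: "x \<in> B" "s = min (\<tau> B) (inf01 (\<mu> ` B))" by auto
    have "s \<le> min (\<tau> B) (inf01 (\<mu>' ` B))" using B inf_mono[of B] by auto
    also have "\<dots> \<le> sup01 {min (\<tau> B) (inf01 (\<mu>' ` B)) | B. x \<in> B}"
      by (rule sup01_ge[OF bdd_fint]) (use B in auto)
    finally show "s \<le> sup01 {min (\<tau> B) (inf01 (\<mu>' ` B)) | B. x \<in> B}" .
  qed
qed

lemma preopen_pt: "x \<in> A \<Longrightarrow> A \<subseteq> A' \<Longrightarrow> preopen \<tau> A \<le> fint \<tau> (fcl \<tau> A') x"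
proof -
  assume x: "x \<in> A" and A: "A \<subseteq> A'"
  have "preopen \<tau> A \<le> fint \<tau> (fcl \<tau> A) x"
    unfolding preopen_def
    apply (rule inf01_le) using fint_01 x by (auto intro: bdd_belowI[of _ 0])
  also have "\<dots> \<le> fint \<tau> (fcl \<tau> A') x"
    by (rule fint_mono) (use fcl_01 fcl_mono A in auto)
  finally show ?thesis .
qed

end

theorem lemma3p1:
  fixes \<tau> :: "'a set \<Rightarrow> real" and \<sigma> :: "'b set \<Rightarrow> real"
    and f :: "'a \<Rightarrow> 'b" and \<beta> :: "'a set \<Rightarrow> real"
  assumes "fuzzifying_topology \<tau>" and "fuzzifying_topology \<sigma>"
    and "is_prebase \<tau> \<beta>"
  shows "pre_open_deg \<tau> \<sigma> f = inf01 {min 1 (1 - \<beta> B + preopen \<sigma> (f ` B)) | B. True}"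
proof -
  have ft: "fuzzy_set \<tau>" and fs: "fuzzy_set \<sigma>"
    using assms(1,2) unfolding fuzzifying_topology_def by auto
  have fb: "fuzzy_set \<beta>" and bt: "\<And>B. \<beta> B \<le> preopen \<tau> B"
    and bn: "\<And>x A. pre_nbhd \<tau> x A \<le> sup01 {\<beta> B | B. x \<in> B \<and> B \<subseteq> A}"
    using assms(3) unfolding is_prebase_def by auto
  have b01: "0 \<le> \<beta> B" "\<beta> B \<le> 1" for B using fb unfolding fuzzy_set_def by auto
  note t01 = preopen_01[OF ft] and s01 = preopen_01[OF fs]
  define r where "r = inf01 {min 1 (1 - \<beta> B + preopen \<sigma> (f ` B)) | B. True}"
  have bddR: "bdd_below {min 1 (1 - \<beta> B + preopen \<sigma> (f ` B)) | B. True}"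
    proof (intro bdd_belowI[of _ 0])
    fix v assume "v \<in> {min 1 (1 - \<beta> B + preopen \<sigma> (f ` B)) | B. True}"
    then obtain B where "v = min 1 (1 - \<beta> B + preopen \<sigma> (f ` B))" by blast
    then show "0 \<le> v" using b01(2)[of B] s01(1)[of "f ` B"] by simp
  qed
  have bddL: "bdd_below {min 1 (1 - preopen \<tau> U + preopen \<sigma> (f ` U)) | U. True}"
    proof (intro bdd_belowI[of _ 0])
    fix v assume "v \<in> {min 1 (1 - preopen \<tau> U + preopen \<sigma> (f ` U)) | U. True}"
    then obtain U where "v = min 1 (1 - preopen \<tau> U + preopen \<sigma> (f ` U))" by blast
    then show "0 \<le> v" using t01(2)[of U] s01(1)[of "f ` U"] by simp
  qed
  have r1: "r \<le> 1" unfolding r_def by (rule inf01_le1[OF bddR])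
  have rB: "r \<le> 1 - \<beta> B + preopen \<sigma> (f ` B)" for B
  proof -
    have "r \<le> min 1 (1 - \<beta> B + preopen \<sigma> (f ` B))"
      unfolding r_def by (rule inf01_le[OF bddR]) auto
    then show ?thesis by simp
  qed
  have le: "pre_open_deg \<tau> \<sigma> f \<le> r"
    unfolding pre_open_deg_def r_def
  proof (rule inf01_ge)
    show "inf01 {min 1 (1 - preopen \<tau> U + preopen \<sigma> (f ` U)) | U. True} \<le> 1"
      by (rule inf01_le1[OF bddL])
    fix s assume "s \<in> {min 1 (1 - \<beta> B + preopen \<sigma> (f ` B)) | B. True}"
    then obtain B where s: "s = min 1 (1 - \<beta> B + preopen \<sigma> (f ` B))" by auto
    have "inf01 {min 1 (1 - preopen \<tau> U + preopen \<sigma> (f ` U)) | U. True}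
       \<le> min 1 (1 - preopen \<tau> B + preopen \<sigma> (f ` B))"
      by (rule inf01_le[OF bddL]) auto
    also have "\<dots> \<le> s" using s bt[of B] by auto
    finally show "inf01 {min 1 (1 - preopen \<tau> U + preopen \<sigma> (f ` U)) | U. True} \<le> s" .
  qed
  have ge: "r \<le> pre_open_deg \<tau> \<sigma> f"
    unfolding pre_open_deg_def
  proof (rule inf01_ge[OF r1])
    fix s assume "s \<in> {min 1 (1 - preopen \<tau> U + preopen \<sigma> (f ` U)) | U. True}"
    then obtain U where s: "s = min 1 (1 - preopen \<tau> U + preopen \<sigma> (f ` U))" by auto
    define t where "t = preopen \<tau> U"
    have key: "r - 1 + t - e \<le> preopen \<sigma> (f ` U)" if e: "e > 0" for e
    proof (cases "t - e \<le> 0")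
      case True then show ?thesis using r1 s01[of "f ` U"] by auto
    next
      case False
      have ex: "\<forall>x\<in>U. \<exists>B. x \<in> B \<and> B \<subseteq> U \<and> t - e < \<beta> B"
      proof
        fix x assume x: "x \<in> U"
        have "t \<le> pre_nbhd \<tau> x U"
          unfolding pre_nbhd_def t_def
          by (rule sup01_ge[OF bdd_preopen[OF ft]]) (use x in auto)
        also have "\<dots> \<le> sup01 {\<beta> B | B. x \<in> B \<and> B \<subseteq> U}" by (rule bn)
        finally have "t - e < sup01 {\<beta> B | B. x \<in> B \<and> B \<subseteq> U}" using e by auto
        moreover have "bdd_above {\<beta> B | B. x \<in> B \<and> B \<subseteq> U}"
          using b01 by (intro bdd_aboveI[of _ 1]) auto
        ultimately show "\<exists>B. x \<in> B \<and> B \<subseteq> U \<and> t - e < \<beta> B"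
          proof -
          assume a: "t - e < sup01 {\<beta> B | B. x \<in> B \<and> B \<subseteq> U}"
            and b: "bdd_above {\<beta> B | B. x \<in> B \<and> B \<subseteq> U}"
          from sup01_gt[OF b a] False obtain v where "v \<in> {\<beta> B | B. x \<in> B \<and> B \<subseteq> U}" "t - e < v"
            by auto
          then show ?thesis by blast
        qed
      qed
      obtain Bx where Bx: "\<And>x. x \<in> U \<Longrightarrow> x \<in> Bx x \<and> Bx x \<subseteq> U \<and> t - e < \<beta> (Bx x)"
        using bchoice[OF ex] by blast
      show ?thesis
        unfolding preopen_def
      proof (rule inf01_ge)
        show "r - 1 + t - e \<le> 1" using r1 t01[of U] t_def e by auto
        fix v assume "v \<in> (\<lambda>y. fint \<sigma> (fcl \<sigma> (f ` U)) y) ` f ` U"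
        then obtain x where x: "x \<in> U" "v = fint \<sigma> (fcl \<sigma> (f ` U)) (f x)" by auto
        have "r - 1 + t - e \<le> preopen \<sigma> (f ` Bx x)" using rB[of "Bx x"] Bx[OF x(1)] by auto
        also have "\<dots> \<le> fint \<sigma> (fcl \<sigma> (f ` U)) (f x)"
          by (rule preopen_pt[OF fs]) (use Bx[OF x(1)] in auto)
        finally show "r - 1 + t - e \<le> v" using x by simp
      qed
    qed
    have "r - 1 + t \<le> preopen \<sigma> (f ` U)"
    proof (rule field_le_epsilon)
      fix e :: real assume "0 < e" then show "r - 1 + t \<le> preopen \<sigma> (f ` U) + e"
        using key[of e] by auto
    qed
    then show "r \<le> s" unfolding s t_def[symmetric] using r1 by linarith
  qed
  have "pre_open_deg \<tau> \<sigma> f = r" using le ge by (rule antisym)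
  then show ?thesis unfolding r_def .
qed

end
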